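(* Under the hypotheses of the PC key inequality (with $\beta>0$, $\boldsymbol{H}_k=\boldsymbol{Q}_k\boldsymbol{M}_k^{-1}$ symmetric positive definite, $\boldsymbol{G}_k=\boldsymbol{Q}_k^T+\boldsymbol{Q}_k-\beta\boldsymbol{M}_k^T\boldsymbol{H}_k\boldsymbol{M}_k\succ0$, and $\boldsymbol{w}^{k+1}=\boldsymbol{w}^k-\beta\boldsymbol{M}_k(\boldsymbol{w}^k-\tilde{\boldsymbol{w}}^k)$), for every $\boldsymbol{w}^*\in\Omega^*$, $$\|\boldsymbol{w}^*-\boldsymbol{w}^{k+1}\|_{\boldsymbol{H}_k}^2\le\|\boldsymbol{w}^*-\boldsymbol{w}^k\|_{\boldsymbol{H}_k}^2-\beta\|\boldsymbol{w}^k-\tilde{\boldsymbol{w}}^k\|_{\boldsymbol{G}_k}^2.$$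
   Context: $\mathcal{X}\subset\mathbb{R}^n$ nonempty closed convex; $f$ convex; $\phi_1,\dots,\phi_m$ convex, continuously differentiable; $\Phi=(\phi_1,\dots,\phi_m)^T$ with $m\times n$ Jacobian $\mathcal{D}\Phi$; $\Omega=\mathcal{X}\times\mathbb{R}^m_+$; $\boldsymbol{\Gamma}(\boldsymbol{w})=(\mathcal{D}\Phi(\boldsymbol{x})^T\boldsymbol{\lambda},-\Phi(\boldsymbol{x}))$; $\Omega^*$ is the set of $\boldsymbol{w}^*=(\boldsymbol{x}^*,\boldsymbol{\lambda}^* )\in\Omega$ with $f(\boldsymbol{x})-f(\boldsymbol{x}^* )+(\boldsymbol{w}-\boldsymbol{w}^* )^T\boldsymbol{\Gamma}(\boldsymbol{w}^* )\ge0$ for all $\boldsymbol{w}\in\Omega$. $\boldsymbol{Q}_k=\begin{pmatrix} r_k\boldsymbol{I}_n & -\mathcal{D}\Phi(\tilde{\boldsymbol{x}}^k)^T\\ \boldsymbol{0} & s_k\boldsymbol{I}_m\end{pmatrix}$ ($r_k,s_k>0$), $\boldsymbol{M}_k$ invertible, and $\tilde{\boldsymbol{w}}^k\in\Omega$ satisfies $f(\boldsymbol{x})-f(\tilde{\boldsymbol{x}}^k)+(\boldsymbol{w}-\tilde{\boldsymbol{w}}^k)^T\boldsymbol{\Gamma}(\tilde{\boldsymbol{w}}^k)\ge(\boldsymbol{w}-\tilde{\boldsymbol{w}}^k)^T\boldsymbol{Q}_k(\boldsymbol{w}^k-\tilde{\boldsymbol{w}}^k)$ for all $\boldsymbol{w}\in\Omega$.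 $\|\boldsymbol{v}\|_{\boldsymbol{H}}^2=\boldsymbol{v}^T\boldsymbol{H}\boldsymbol{v}$. *)

theory Defs
  imports "HOL-Analysis.Analysis"
begin

text \<open>Vectors w = (x, lambda) in R^(n+m) are modelled as real^('n::finite + 'm::finite).\<close>

definition join :: "real^'n::finite \<Rightarrow> real^'m::finite \<Rightarrow> real^('n::finite + 'm::finite)" where
  "join x l = (\<chi> i. case i of Inl a \<Rightarrow> x $ a | Inr b \<Rightarrow> l $ b)"

definition xpart :: "real^('n::finite + 'm::finite) \<Rightarrow> real^'n::finite" where
  "xpart w = (\<chi> a. w $ Inl a)"

definition lpart :: "real^('n::finite + 'm::finite) \<Rightarrow> real^'m::finite" where
  "lpart w = (\<chi> b. w $ Inr b)"

definition jacobian :: "(real^'n::finite \<Rightarrow> real^'m::finite) \<Rightarrow> real^'n::finite \<Rightarrow> real^'n::finite^'m::finite" where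
  "jacobian Phi x = matrix (frechet_derivative Phi (at x))"

definition Omega :: "(real^'n::finite) set \<Rightarrow> (real^('n::finite + 'm::finite)) set" where
  "Omega X = {w. xpart w \<in> X \<and> (\<forall>j. lpart w $ j \<ge> 0)}"

definition Gamma :: "(real^'n::finite \<Rightarrow> real^'m::finite) \<Rightarrow> real^('n::finite + 'm::finite) \<Rightarrow> real^('n::finite + 'm::finite)" where
  "Gamma Phi w = join (transpose (jacobian Phi (xpart w)) *v lpart w) (- Phi (xpart w))"

definition Omega_star :: "(real^'n::finite) set \<Rightarrow> (real^'n::finite \<Rightarrow> real) \<Rightarrow> (real^'n::finite \<Rightarrow> real^'m::finite)
    \<Rightarrow> (real^('n::finite + 'm::finite)) set" where
  "Omega_star X f Phi = {ws \<in> Omega X. \<forall>w \<in> Omega X.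
      f (xpart w) - f (xpart ws) + (w - ws) \<bullet> Gamma Phi ws \<ge> 0}"

text \<open>Q_k = [[r I_n, - DPhi(x~)^T], [0, s I_m]].\<close>
definition Qmat :: "real \<Rightarrow> real \<Rightarrow> real^'n::finite^'m::finite \<Rightarrow> real^('n::finite + 'm::finite)^('n::finite + 'm::finite)" where
  "Qmat r s J = (\<chi> i j. case i of
      Inl a \<Rightarrow> (case j of Inl b \<Rightarrow> (if a = b then r else 0) | Inr b \<Rightarrow> - (J $ b $ a))
    | Inr a \<Rightarrow> (case j of Inl b \<Rightarrow> 0 | Inr b \<Rightarrow> (if a = b then s else 0)))"

definition normsq :: "real^'k::finite^'k::finite \<Rightarrow> real^'k::finite \<Rightarrow> real" where
  "normsq H v = v \<bullet> (H *v v)"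

definition sym_pos_def :: "real^'k::finite^'k::finite \<Rightarrow> bool" where
  "sym_pos_def A \<longleftrightarrow> transpose A = A \<and> (\<forall>v. v \<noteq> 0 \<longrightarrow> v \<bullet> (A *v v) > 0)"

end

theory Submission
  imports Defs
begin

lemma Phi_deriv:
  fixes Phi :: "real^'n \<Rightarrow> real^'m"
  assumes "Phi differentiable (at y)"
  shows "(Phi has_derivative (\<lambda>h. jacobian Phi y *v h)) (at y)"
  using assms Cartesian_Euclidean_Space.jacobian_works[of Phi "at y"]
  by (simp add: Defs.jacobian_def Cartesian_Euclidean_Space.jacobian_def)

lemma grad_ineq:
  fixes g :: "real^'n \<Rightarrow> real"
  assumes cv: "convex_on UNIV g" and d: "(g has_derivative D) (at y)"
  shows "g x \<ge> g y + D (x - y)"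
proof -
  define h where "h t = g (y + t *\<^sub>R (x - y))" for t :: real
  have lin: "linear D" using d has_derivative_linear by blast
  have cvh: "convex_on UNIV h"
  proof (rule convex_onI)
    fix a t u :: real assume a: "0 < a" "a < 1"
    have "y + ((1 - a) * t + a * u) *\<^sub>R (x - y) = (1-a) *\<^sub>R (y + t *\<^sub>R (x - y)) + a *\<^sub>R (y + u *\<^sub>R (x - y))"
      by (simp add: algebra_simps)
    then show "h ((1 - a) *\<^sub>R t + a *\<^sub>R u) \<le> (1 - a) * h t + a * h u"
      unfolding h_def using convex_onD[OF cv, of a] a by auto
  qed simp
  have "((\<lambda>t. y + t *\<^sub>R (x - y)) has_derivative (\<lambda>t. t *\<^sub>R (x - y))) (at 0)"
    by (auto intro!: derivative_eq_intros)
  then have "(h has_derivative (\<lambda>t. D (t *\<^sub>R (x - y)))) (at 0)"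
    unfolding h_def using has_derivative_compose[of "\<lambda>t. y + t *\<^sub>R (x - y)" _ 0 UNIV g D] d
    by (simp add: o_def)
  moreover have "(\<lambda>t. D (t *\<^sub>R (x - y))) = (\<lambda>t. D (x - y) * t)"
    using lin by (auto simp: linear_scale)
  ultimately have "(h has_field_derivative D (x - y)) (at 0)"
    by (simp add: has_field_derivative_def)
  from convex_on_imp_above_tangent[OF cvh _ _ _ this, of 1]
  have "h 1 - h 0 \<ge> D (x - y) * (1 - 0)" by simp
  then show ?thesis by (simp add: h_def)
qed

lemma inner_join:
  fixes u :: "real^('n::finite + 'm::finite)"
  shows "u \<bullet> join a b = xpart u \<bullet> a + lpart u \<bullet> b"
proof -
  have U: "(UNIV :: ('n + 'm) set) = UNIV <+> UNIV" by (simp add: UNIV_Plus_UNIV)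
  show ?thesis
    unfolding inner_vec_def join_def xpart_def lpart_def
    by (subst U, subst sum.Plus) (simp_all add: o_def)
qed

lemma xpart_diff: "xpart (u - v) = xpart u - xpart v"
  by (simp add: xpart_def vec_eq_iff)
lemma lpart_diff: "lpart (u - v) = lpart u - lpart v"
  by (simp add: lpart_def vec_eq_iff)

lemma inner_transpose: "(x::real^'n) \<bullet> (transpose A *v l) = (A *v x) \<bullet> l"
  by (metis dot_lmul_matrix inner_commute vector_transpose_matrix)

lemma Gamma_mono:
  fixes Phi :: "real^'n \<Rightarrow> real^'m"
  assumes Phi_convex: "\<And>i. convex_on UNIV (\<lambda>x. Phi x $ i)"
    and Phi_diff: "\<And>x. Phi differentiable (at x)"
    and a: "\<forall>j. lpart wa $ j \<ge> 0" and b: "\<forall>j. lpart wb $ j \<ge> 0"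
  shows "(wa - wb) \<bullet> (Gamma Phi wa - Gamma Phi wb) \<ge> 0"
proof -
  define xa where "xa = xpart wa"
  define xb where "xb = xpart wb"
  define la where "la = lpart wa"
  define lb where "lb = lpart wb"
  define Ja where "Ja = jacobian Phi xa"
  define Jb where "Jb = jacobian Phi xb"
  have tan: "Phi x $ i \<ge> Phi y $ i + (jacobian Phi y *v (x - y)) $ i" for x y i
  proof -
    have "((\<lambda>x. Phi x $ i) has_derivative (\<lambda>h. (jacobian Phi y *v h) $ i)) (at y)"
      using bounded_linear.has_derivative[OF bounded_linear_vec_nth Phi_deriv[OF Phi_diff]] .
    from grad_ineq[OF Phi_convex this] show ?thesis .
  qed
  have e1: "la \<bullet> (Ja *v (xa - xb) - Phi xa + Phi xb) \<ge> 0"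
    unfolding inner_vec_def
  proof (intro sum_nonneg)
    fix j
    have "0 \<le> (Ja *v (xa - xb) - Phi xa + Phi xb) $ j"
      using tan[where x=xb and y=xa and i=j] unfolding Ja_def
      by (simp add: matrix_vector_mult_diff_distrib)
    then show "0 \<le> la $ j \<bullet> (Ja *v (xa - xb) - Phi xa + Phi xb) $ j"
      using a unfolding la_def by simp
  qed
  have e2: "lb \<bullet> (Phi xa - Phi xb - Jb *v (xa - xb)) \<ge> 0"
    unfolding inner_vec_def
  proof (intro sum_nonneg)
    fix j
    have "0 \<le> (Phi xa - Phi xb - Jb *v (xa - xb)) $ j"
      using tan[where x=xa and y=xb and i=j] unfolding Jb_def
      by (simp add: matrix_vector_mult_diff_distrib)
    then show "0 \<le> lb $ j \<bullet> (Phi xa - Phi xb - Jb *v (xa - xb)) $ j"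
      using b unfolding lb_def by simp
  qed
  have "Gamma Phi wa - Gamma Phi wb = join (transpose Ja *v la - transpose Jb *v lb) (Phi xb - Phi xa)"
    unfolding Gamma_def join_def xa_def xb_def la_def lb_def Ja_def Jb_def by (simp add: vec_eq_iff split: sum.splits)
  then have "(wa - wb) \<bullet> (Gamma Phi wa - Gamma Phi wb)
      = (xa - xb) \<bullet> (transpose Ja *v la) - (xa - xb) \<bullet> (transpose Jb *v lb) + (la - lb) \<bullet> (Phi xb - Phi xa)"
    by (simp add: inner_join xpart_diff lpart_diff xa_def xb_def la_def lb_def inner_diff_right)
  also have "\<dots> = la \<bullet> (Ja *v (xa - xb) - Phi xa + Phi xb) + lb \<bullet> (Phi xa - Phi xb - Jb *v (xa - xb))"
  proof -
    have t1: "(xa - xb) \<bullet> (transpose Ja *v la) = la \<bullet> (Ja *v (xa - xb))"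
      by (metis inner_transpose inner_commute)
    have t2: "(xa - xb) \<bullet> (transpose Jb *v lb) = lb \<bullet> (Jb *v (xa - xb))"
      by (metis inner_transpose inner_commute)
    show ?thesis unfolding t1 t2
      by (simp only: inner_diff_left inner_diff_right inner_add_right inner_commute)
  qed
  finally show ?thesis using e1 e2 by linarith
qed

theorem theorem4:
  fixes X :: "(real^'n) set" and f :: "real^'n \<Rightarrow> real" and Phi :: "real^'n \<Rightarrow> real^'m"
    and r s beta :: real and M :: "real^('n + 'm)^('n + 'm)"
    and wk wt wk1 ws :: "real^('n + 'm)"
  assumes X: "X \<noteq> {}" "closed X" "convex X"
    and f_convex: "convex_on UNIV f"
    and Phi_convex: "\<And>i. convex_on UNIV (\<lambda>x. Phi x $ i)"
    and Phi_diff: "\<And>x. Phi differentiable (at x)"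
    and Phi_C1: "continuous_on UNIV (jacobian Phi)"
    and rs: "r > 0" "s > 0"
    and M_inv: "invertible M"
    and wt_Omega: "wt \<in> Omega X"
    and wt_VI: "\<forall>w \<in> Omega X. f (xpart w) - f (xpart wt) + (w - wt) \<bullet> Gamma Phi wt
                 \<ge> (w - wt) \<bullet> (Qmat r s (jacobian Phi (xpart wt)) *v (wk - wt))"
    and beta: "beta > 0"
    and H_pd: "sym_pos_def (Qmat r s (jacobian Phi (xpart wt)) ** matrix_inv M)"
    and G_pd: "sym_pos_def (transpose (Qmat r s (jacobian Phi (xpart wt)))
                 + Qmat r s (jacobian Phi (xpart wt))
                 - beta *\<^sub>R (transpose M ** (Qmat r s (jacobian Phi (xpart wt)) ** matrix_inv M) ** M))"
    and update: "wk1 = wk - beta *\<^sub>R (M *v (wk - wt))"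
    and ws_star: "ws \<in> Omega_star X f Phi"
  shows "normsq (Qmat r s (jacobian Phi (xpart wt)) ** matrix_inv M) (ws - wk1)
         \<le> normsq (Qmat r s (jacobian Phi (xpart wt)) ** matrix_inv M) (ws - wk)
            - beta * normsq (transpose (Qmat r s (jacobian Phi (xpart wt)))
                 + Qmat r s (jacobian Phi (xpart wt))
                 - beta *\<^sub>R (transpose M ** (Qmat r s (jacobian Phi (xpart wt)) ** matrix_inv M) ** M)) (wk - wt)"
proof -
  define Q where "Q = Qmat r s (jacobian Phi (xpart wt))"
  define Mi where "Mi = matrix_inv M"
  define H where "H = Q ** Mi"
  define T where "T = transpose M ** H ** M"
  define d where "d = wk - wt"
  have ws_O: "ws \<in> Omega X" and ws_VI: "\<forall>w \<in> Omega X. f (xpart w) - f (xpart ws) + (w - ws) \<bullet> Gamma Phi ws \<ge> 0"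
    using ws_star unfolding Omega_star_def by auto
  have key: "(ws - wt) \<bullet> (Q *v d) \<le> 0"
  proof -
    have v1: "f (xpart ws) - f (xpart wt) + (ws - wt) \<bullet> Gamma Phi wt \<ge> (ws - wt) \<bullet> (Q *v d)"
      using wt_VI ws_O unfolding Q_def d_def by blast
    have v2: "f (xpart wt) - f (xpart ws) + (wt - ws) \<bullet> Gamma Phi ws \<ge> 0"
      using ws_VI wt_Omega by blast
    have v3: "(wt - ws) \<bullet> (Gamma Phi wt - Gamma Phi ws) \<ge> 0"
      using Gamma_mono[OF Phi_convex Phi_diff] wt_Omega ws_O unfolding Omega_def by blast
    have "(ws - wt) \<bullet> Gamma Phi wt = - ((wt - ws) \<bullet> Gamma Phi wt)"
      by (metis inner_minus_left minus_diff_eq)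
    then show ?thesis using v1 v2 v3 by (simp add: inner_diff_right)
  qed
  have MiM: "Mi ** M = mat 1"
  proof -
    have "\<exists>A'. M ** A' = mat 1 \<and> A' ** M = mat 1" using M_inv unfolding invertible_def by blast
    from someI_ex[OF this] show ?thesis unfolding Mi_def matrix_inv_def by blast
  qed
  have HM: "H ** M = Q" unfolding H_def by (metis matrix_mul_assoc MiM matrix_mul_rid)
  have Hsym: "transpose H = H" using H_pd unfolding sym_pos_def_def Q_def Mi_def H_def by blast
  have Hs: "a \<bullet> (H *v b) = b \<bullet> (H *v a)" for a b
    by (metis Hsym inner_transpose inner_commute)
  have Qt: "d \<bullet> (transpose Q *v d) = d \<bullet> (Q *v d)"
    by (metis inner_transpose inner_commute)
  have Qt2: "d \<bullet> (d v* Q) = d \<bullet> (Q *v d)"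
    by (metis dot_lmul_matrix inner_commute)
  define a where "a = ws - wk"
  define b where "b = M *v d"
  have e1: "ws - wk1 = a + beta *\<^sub>R b" unfolding a_def b_def d_def update by simp
  have Hb: "H *v b = Q *v d" unfolding b_def by (simp add: matrix_vector_mul_assoc HM)
  have bHb: "b \<bullet> (H *v b) = d \<bullet> (T *v d)"
    unfolding b_def T_def
    by (metis inner_transpose matrix_vector_mul_assoc)
  have N1: "normsq H (ws - wk1) = a \<bullet> (H *v a) + 2 * beta * (a \<bullet> (Q *v d)) + beta^2 * (d \<bullet> (T *v d))"
  proof -
    have "normsq H (ws - wk1) = a \<bullet> (H *v a) + beta * (a \<bullet> (H *v b)) + beta * (b \<bullet> (H *v a)) + beta * beta * (b \<bullet> (H *v b))"
      unfolding normsq_def e1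
      by (simp add: matrix_vector_right_distrib matrix_vector_mult_scaleR inner_add_left inner_add_right algebra_simps)
    then show ?thesis using Hs[of b a] Hb bHb by (simp add: power2_eq_square)
  qed
  have N2: "normsq (transpose Q + Q - beta *\<^sub>R T) d = 2 * (d \<bullet> (Q *v d)) - beta * (d \<bullet> (T *v d))"
    unfolding normsq_def
    by (simp add: matrix_vector_mult_add_rdistrib matrix_vector_mult_diff_rdistrib
        scaleR_matrix_vector_assoc[symmetric] inner_add_right inner_diff_right Qt Qt2)
  have ad: "a + d = ws - wt" unfolding a_def d_def by simp
  have "a \<bullet> (Q *v d) + d \<bullet> (Q *v d) \<le> 0" using key unfolding ad[symmetric] by (simp add: inner_add_left)
  then have "beta * (a \<bullet> (Q *v d) + d \<bullet> (Q *v d)) \<le> 0" using beta by (simp add: mult_nonneg_nonpos)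
  then have "normsq H (ws - wk1) \<le> normsq H (ws - wk) - beta * normsq (transpose Q + Q - beta *\<^sub>R T) d"
  proof -
    have N0: "normsq H (ws - wk) = a \<bullet> (H *v a)" by (simp add: normsq_def a_def)
    show ?thesis unfolding N0 N1 N2 using \<open>beta * (a \<bullet> (Q *v d) + d \<bullet> (Q *v d)) \<le> 0\<close>
      by (simp add: algebra_simps power2_eq_square)
  qed
  then show ?thesis unfolding H_def T_def Q_def Mi_def d_def by simp
qed

end
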